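(* Let $\alpha,\beta\in\mathbb{R}$ satisfy $4<\alpha^2<6$ and $\frac{4}{100}<\beta<\frac{165}{100}$, and let $q_{\alpha,\beta}(w)=w^4+\alpha w^3+(\beta-4)w^2-\alpha w+3$ for $w\in\mathbb{C}$. Then $q_{\alpha,\beta}$ has $4$ pairwise different roots, exactly $2$ of which are real, and the remaining $2$ are non-real and complex conjugate to each other. *)

theory Defs
  imports Complex_Main "HOL-Computational_Algebra.Polynomial"
begin

definition q_ab :: "real \<Rightarrow> real \<Rightarrow> complex poly" where
  "q_ab \<alpha> \<beta> = [: 3, - complex_of_real \<alpha>, complex_of_real (\<beta> - 4), complex_of_real \<alpha>, 1 :]"

end

theory Submission
  imports Defs
begin

lemma poly_q: "poly (q_ab a b) w = w^4 + of_real a * w^3 + of_real (b-4) * w^2 - of_real a * w + 3"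
  by (simp add: q_ab_def algebra_simps power2_eq_square power3_eq_cube power4_eq_xxxx)

lemma a_bound: fixes a::real assumes "a^2 < 6" shows "a < 24495/10000"
proof (rule ccontr)
  assume "\<not> ?thesis" then have h: "24495/10000 \<le> a" by simp
  have "(24495/10000::real)^2 \<le> a^2" by (rule power_mono[OF h]) simp
  moreover have "(24495/10000::real)^2 > 6" by (simp add: power2_eq_square)
  ultimately show False using assms by linarith
qed

lemma f_pos_01: fixes a b x :: real
  assumes "0<x" "x<1" "0<a" "a<24495/10000" "4/100<b"
  shows "x^4 + a*x^3 + (b-4)*x^2 - a*x + 3 > 0"
proof -
  define c :: real where "c = 24495/10000"
  have id: "x^4 + c*x^3 - 396/100*x^2 - c*x + 3 = (x-945/1000)^2*(x^2 + 8679/2000*x + 334863/100000) + (330297/80000000*x + 38358777/4000000000)"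
    unfolding c_def by (simp add: field_simps power2_eq_square power3_eq_cube power4_eq_xxxx)
  have "(x-945/1000)^2*(x^2 + 8679/2000*x + 334863/100000) \<ge> 0"
    using assms by (intro mult_nonneg_nonneg) auto
  moreover have "330297/80000000*x + 38358777/4000000000 > 0" using assms by simp
  ultimately have h1: "x^4 + c*x^3 - 396/100*x^2 - c*x + 3 > 0" using id by linarith
  have "x^3 \<le> x" using assms by (simp add: power3_eq_cube mult_le_one) 
  then have h2: "(c - a)*(x - x^3) \<ge> 0" using assms unfolding c_def by (intro mult_nonneg_nonneg) auto
  have h3: "(b - 4/100)*x^2 > 0" using assms by simp
  have "x^4 + a*x^3 + (b-4)*x^2 - a*x + 3 = (x^4 + c*x^3 - 396/100*x^2 - c*x + 3) + (c - a)*(x - x^3) + (b - 4/100)*x^2"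
    by (simp add: algebra_simps)
  then show ?thesis using h1 h2 h3 by linarith
qed

lemma f_pos: fixes a b x :: real
  assumes "-1 \<le> x" "2<a" "a<24495/10000" "4/100<b"
  shows "x^4 + a*x^3 + (b-4)*x^2 - a*x + 3 > 0"
proof -
  have id: "x^4 + a*x^3 + (b-4)*x^2 - a*x + 3 = (x^2-1)*(x^2+a*x-3) + b*x^2"
    by (simp add: algebra_simps power2_eq_square power3_eq_cube power4_eq_xxxx)
  consider "1 \<le> x" | "x = 0" | "-1 \<le> x \<and> x < 0" | "0 < x \<and> x < 1" using assms by linarith
  then show ?thesis
  proof cases
    case 1
    have "x^2 \<ge> 1" using 1 by (simp add: one_le_power)
    moreover have "a*x \<ge> a" using 1 assms by simp
    ultimately have "x^2+a*x-3 \<ge> 0" "x^2-1 \<ge> 0" using assms by linarith+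
    then have "(x^2-1)*(x^2+a*x-3) \<ge> 0" by simp
    moreover have "b*x^2 > 0" using 1 assms by simp
    ultimately show ?thesis using id by linarith
  next
    case 2 then show ?thesis by simp
  next
    case 3
    have "x^2 \<le> 1" using 3 by (simp add: abs_le_square_iff power_le_one_iff abs_square_le_1)
    moreover have "a*x < 0" using 3 assms by (simp add: mult_pos_neg)
    ultimately have "x^2+a*x-3 \<le> 0" "x^2-1 \<le> 0" using assms by linarith+
    then have "(x^2-1)*(x^2+a*x-3) \<ge> 0" by (simp add: mult_nonpos_nonpos)
    moreover have "b*x^2 > 0" using 3 assms by simp
    ultimately show ?thesis using id by linarith
  next
    case 4 then show ?thesis using f_pos_01 assms by simp
  qed
qed

lemma quartic_id: fixes x A B S Pp :: "'a::comm_ring_1"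
  shows "x^4 + A*x^3 + (B-4)*x^2 - A*x + 3 = (x^2 - S*x + Pp)*(x^2 + (A+S)*x + (B-4+S*(A+S)-Pp))
     + (-A + S*(B-4+S*(A+S)-Pp) - Pp*(A+S))*x + (3 - Pp*(B-4+S*(A+S)-Pp))"
  by (simp add: algebra_simps power2_eq_square power3_eq_cube power4_eq_xxxx)

lemma core: fixes a b :: real
  assumes "2 < a" "a^2 < 6" "4/100 < b" "b < 165/100"
  shows "\<exists>r1 r2 z. r1 \<noteq> r2 \<and> Im z \<noteq> 0 \<and>
     (\<forall>w. poly (q_ab a b) w = (w - of_real r1)*(w - of_real r2)*(w - z)*(w - cnj z))"
proof -
  define f where "f x = x^4 + a*x^3 + (b-4)*x^2 - a*x + 3" for x :: real
  have ab: "a < 24495/10000" using a_bound assms by blast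
  have cont: "continuous_on S f" for S unfolding f_def by (intro continuous_intros)
  have fm4: "f (-4) > 0" using assms ab unfolding f_def by simp
  have fm2: "f (-2) < 0" using assms ab unfolding f_def by simp
  have fm1: "f (-1) > 0" using assms ab unfolding f_def by simp
  obtain r1 where r1: "-4 \<le> r1" "r1 \<le> -2" "f r1 = 0"
    using IVT2'[of f "-2" 0 "-4", OF _ _ _ cont] fm4 fm2 by auto
  obtain r2 where r2: "-2 \<le> r2" "r2 \<le> -1" "f r2 = 0"
    using IVT'[of f "-2" 0 "-1", OF _ _ _ cont] fm1 fm2 by auto
  have r12: "r1 < -2" "-2 < r2" "r2 < -1" using r1 r2 fm2 fm1 by (auto intro: order.not_eq_order_implies_strict)
  define s where "s = r1 + r2"
  define P where "P = r1 * r2"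
  define u where "u = a + s"
  define v where "v = b-4+s*(a+s)-P"
  define al where "al = -a + s*(b-4+s*(a+s)-P) - P*(a+s)"
  define be where "be = 3 - P*(b-4+s*(a+s)-P)"
  have fid: "f x = (x^2 - s*x + P)*(x^2+u*x+v) + al*x + be" for x
    unfolding f_def u_def v_def al_def be_def by (rule quartic_id)
  have "(r1^2 - s*r1 + P) = 0" "(r2^2 - s*r2 + P) = 0" unfolding s_def P_def by (simp_all add: algebra_simps power2_eq_square)
  then have "al*r1 + be = 0" "al*r2 + be = 0" using fid[of r1] fid[of r2] r1 r2 by simp_all
  then have "al*r1 - al*r2 = 0" by linarith
  then have "al*(r1-r2) = 0" by (simp add: right_diff_distrib)
  then have al0: "al = 0" using r12 by simp
  then have be0: "be = 0" using \<open>al*r1+be=0\<close> by simp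
  have ffac: "f x = (x^2 - s*x + P)*(x^2+u*x+v)" for x using fid[of x] al0 be0 by simp
  have neg: "x < -1" if "f x = 0" for x using f_pos[of x a b] assms ab that unfolding f_def by force
  have u_neg: "u < 0" using u_def s_def r12 ab by simp
  define D where "D = u^2 - 4*v"
  have D: "D < 0"
  proof (rule ccontr)
    assume "\<not> D < 0" hence D0: "D \<ge> 0" by simp
    define x3 where "x3 = (-u + sqrt D)/2"
    define x4 where "x4 = (-u - sqrt D)/2"
    have sq: "sqrt D * sqrt D = u^2 - 4*v" using D0 D_def by simp
    have "x3^2 + u*x3 + v = 0" unfolding x3_def using sq by (simp add: field_simps power2_eq_square) 
    then have "f x3 = 0" using ffac by simp
    then have "x3 < -1" by (rule neg)
    have "x4^2 + u*x4 + v = 0" unfolding x4_def using sq by (simp add: field_simps power2_eq_square) 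
    then have "f x4 = 0" using ffac by simp
    then have "x4 < -1" by (rule neg)
    have "x3 + x4 = -u" unfolding x3_def x4_def by (simp add: field_simps)
    then show False using \<open>x3 < -1\<close> \<open>x4 < -1\<close> u_neg by linarith
  qed
  define z where "z = Complex (-u/2) (sqrt (-D)/2)"
  have Imz: "Im z \<noteq> 0" unfolding z_def using D by simp
  have zsum: "z + cnj z = - of_real u" unfolding z_def by (simp add: complex_eq_iff)
  have zprod: "z * cnj z = of_real v" unfolding z_def using D
    by (simp add: complex_eq_iff D_def power2_eq_square field_simps)
  have "poly (q_ab a b) w = (w - of_real r1)*(w - of_real r2)*(w - z)*(w - cnj z)" for w
  proof -
    have "poly (q_ab a b) w = (w^2 - of_real s*w + of_real P)*(w^2 + (of_real a + of_real s)*w + (of_real b - 4 + of_real s*(of_real a+of_real s) - of_real P)) + (of_real al)*w + of_real be"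
      using quartic_id[of w "of_real a" "of_real b" "of_real s" "of_real P"] unfolding poly_q al_def be_def by simp
    also have "\<dots> = (w^2 - of_real s*w + of_real P)*(w^2 + of_real u*w + of_real v)"
      using al0 be0 unfolding u_def v_def by simp
    also have "w^2 - of_real s*w + of_real P = (w - of_real r1)*(w - of_real r2)"
      unfolding s_def P_def by (simp add: algebra_simps power2_eq_square)
    also have "w^2 + of_real u*w + of_real v = (w - z)*(w - cnj z)"
    proof -
      have "(w - z)*(w - cnj z) = w^2 - (z + cnj z)*w + z * cnj z" by (simp add: algebra_simps power2_eq_square)
      then show ?thesis using zsum zprod by simp
    qed
    finally show ?thesis by (simp add: mult.assoc)
  qed
  moreover have "r1 \<noteq> r2" using r12 by simp
  ultimately show ?thesis using Imz by blast
qed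

lemma core2: fixes a b :: real
  assumes "4 < a^2" "a^2 < 6" "4/100 < b" "b < 165/100"
  shows "\<exists>r1 r2 z. r1 \<noteq> r2 \<and> Im z \<noteq> 0 \<and>
     (\<forall>w. poly (q_ab a b) w = (w - of_real r1)*(w - of_real r2)*(w - z)*(w - cnj z))"
proof (cases "a > 0")
  case True
  have "a > 2"
  proof (rule ccontr)
    assume "\<not> a > 2" then have "a^2 \<le> 2^2" using True by (intro power_mono) auto
    then show False using assms by simp
  qed
  then show ?thesis using core assms by blast
next
  case False
  have "-a > 2"
  proof (rule ccontr)
    assume "\<not> -a > 2" then have "(-a)^2 \<le> 2^2" using False by (intro power_mono) auto
    then show False using assms by simp
  qed
  then obtain r1 r2 z where h: "r1 \<noteq> r2" "Im z \<noteq> 0"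
     "\<And>w. poly (q_ab (-a) b) w = (w - of_real r1)*(w - of_real r2)*(w - z)*(w - cnj z)"
    using core[of "-a" b] assms by auto
  have "poly (q_ab a b) w = (w - of_real (-r1))*(w - of_real (-r2))*(w - (-z))*(w - cnj (-z))" for w
  proof -
    have "poly (q_ab a b) w = poly (q_ab (-a) b) (-w)" unfolding poly_q by (simp add: power4_eq_xxxx power3_eq_cube)
    also have "\<dots> = (w - of_real (-r1))*(w - of_real (-r2))*(w - (-z))*(w - cnj (-z))"
      unfolding h(3) by (simp add: algebra_simps)
    finally show ?thesis .
  qed
  moreover have "-r1 \<noteq> -r2" "Im (-z) \<noteq> 0" using h by auto
  ultimately show ?thesis by blast
qed

theorem mainTheorem2:
  fixes \<alpha> \<beta> :: real
  assumes "4 < \<alpha>^2" and "\<alpha>^2 < 6"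
    and "4/100 < \<beta>" and "\<beta> < 165/100"
  shows "card {w. poly (q_ab \<alpha> \<beta>) w = 0} = 4
    \<and> card {w. poly (q_ab \<alpha> \<beta>) w = 0 \<and> w \<in> \<real>} = 2
    \<and> (\<exists>z. z \<notin> \<real> \<and> {w. poly (q_ab \<alpha> \<beta>) w = 0 \<and> w \<notin> \<real>} = {z, cnj z})"
proof -
  obtain r1 r2 z where h: "r1 \<noteq> r2" "Im z \<noteq> 0"
     "\<And>w. poly (q_ab \<alpha> \<beta>) w = (w - of_real r1)*(w - of_real r2)*(w - z)*(w - cnj z)"
    using core2 assms by blast
  have roots: "{w. poly (q_ab \<alpha> \<beta>) w = 0} = {of_real r1, of_real r2, z, cnj z}"
    unfolding h(3) by auto
  have zR: "z \<notin> \<real>" "cnj z \<notin> \<real>" using h(2) by (auto simp: complex_is_Real_iff)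
  have zc: "z \<noteq> cnj z" using h(2) by (auto simp: complex_eq_iff)
  have d12: "(of_real r1 :: complex) \<noteq> of_real r2" using h(1) by simp
  have nr: "complex_of_real r1 \<noteq> z" "complex_of_real r1 \<noteq> cnj z"
    "complex_of_real r2 \<noteq> z" "complex_of_real r2 \<noteq> cnj z"
    using zR by (metis Reals_of_real)+
  have "card {of_real r1, of_real r2, z, cnj z} = 4"
    using zR zc d12 nr by (auto simp: card_insert_if)
  moreover have "{w. poly (q_ab \<alpha> \<beta>) w = 0 \<and> w \<in> \<real>} = {of_real r1, of_real r2}"
    unfolding h(3) using zR by auto
  moreover have "{w. poly (q_ab \<alpha> \<beta>) w = 0 \<and> w \<notin> \<real>} = {z, cnj z}"
    unfolding h(3) using zR by auto
  ultimately show ?thesis using roots zR d12 by auto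
qed

end
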